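(* Let $m\ge 2$ be even, $n\ge2$, and $c\in\mathbb{R}^n$ with $c_{i_1}+\cdots+c_{i_m}\neq0$ for all $i_1,\dots,i_m\in[n]$. Let $\mathcal{C}$ be the Cauchy tensor of order $m$ and dimension $n$ with generating vector $c$. Then the following are equivalent: (i) $\mathcal{C}$ is an SOS tensor; (ii) $\mathcal{C}$ is positive semi-definite; (iii) $\mathcal{C}$ is a completely positive tensor; (iv) $c_i>0$ for all $i\in[n]$.
   Context: $[n]=\{1,\dots,n\}$. The (symmetric) Cauchy tensor with generating vector $c$ is $\mathcal{C}=(c_{i_1\cdots i_m})$, $c_{i_1\cdots i_m}=\frac{1}{c_{i_1}+c_{i_2}+\cdots+c_{i_m}}$. For $x\in\mathbb{R}^n$, $\mathcal{C}x^m=\sum_{i_1,\dots,i_m}c_{i_1\cdots i_m}x_{i_1}\cdots x_{i_m}$. Positive semi-definite: $\mathcal{C}x^m\ge0$ for all $x\in\mathbb{R}^n$. SOS tensor (order $m=2k$): $x\mapsto\mathcal{C}x^m$ is a sum of squares of polynomials of degree $k$. Completely positive: $\mathcal{C}=\sum_{j=1}^r x_j^m$ for some $x_j\in\mathbb{R}^n_+$, where $x^m$ is the rank-one tensor with entries $x_{i_1}\cdots x_{i_m}$. *)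

theory Defs
  imports Complex_Main
begin

definition idx :: "nat \<Rightarrow> nat \<Rightarrow> nat list set" where
  "idx m n = {is. length is = m \<and> set is \<subseteq> {1..n}}"

text \<open>A real tensor of order m, dimension n: a function on index lists (values on idx m n matter).\<close>
type_synonym tensor = "nat list \<Rightarrow> real"

definition cauchy_tensor :: "(nat \<Rightarrow> real) \<Rightarrow> tensor" where
  "cauchy_tensor c = (\<lambda>is. 1 / sum_list (map c is))"

definition tensor_form :: "nat \<Rightarrow> nat \<Rightarrow> tensor \<Rightarrow> (nat \<Rightarrow> real) \<Rightarrow> real" where
  "tensor_form m n T x = (\<Sum>is\<in>idx m n. T is * prod_list (map x is))"

definition psd_tensor :: "nat \<Rightarrow> nat \<Rightarrow> tensor \<Rightarrow> bool" where
  "psd_tensor m n T \<longleftrightarrow> (\<forall>x. tensor_form m n T x \<ge> 0)"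

definition poly_deg_le :: "nat \<Rightarrow> nat \<Rightarrow> ((nat \<Rightarrow> real) \<Rightarrow> real) \<Rightarrow> bool" where
  "poly_deg_le n k p \<longleftrightarrow> (\<exists>a :: nat list \<Rightarrow> real. \<forall>x.
     p x = (\<Sum>is\<in>{is. length is \<le> k \<and> set is \<subseteq> {1..n}}. a is * prod_list (map x is)))"

definition sos_tensor :: "nat \<Rightarrow> nat \<Rightarrow> tensor \<Rightarrow> bool" where
  "sos_tensor m n T \<longleftrightarrow> (\<exists>(r::nat) (ps :: nat \<Rightarrow> (nat \<Rightarrow> real) \<Rightarrow> real).
     (\<forall>j<r. poly_deg_le n (m div 2) (ps j)) \<and>
     (\<forall>x. tensor_form m n T x = (\<Sum>j<r. (ps j x)^2)))"

definition completely_positive :: "nat \<Rightarrow> nat \<Rightarrow> tensor \<Rightarrow> bool" where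
  "completely_positive m n T \<longleftrightarrow> (\<exists>(r::nat) (xs :: nat \<Rightarrow> nat \<Rightarrow> real).
     (\<forall>j<r. \<forall>i\<in>{1..n}. xs j i \<ge> 0) \<and>
     (\<forall>is\<in>idx m n. T is = (\<Sum>j<r. prod_list (map (xs j) is))))"

end

theory Submission
  imports Defs
begin

lemma lists_Suc_eq:
  "{is. length is = Suc k \<and> set is \<subseteq> A} = (\<lambda>(a,l). a#l) ` (A \<times> {is. length is = k \<and> set is \<subseteq> A})"
proof (rule set_eqI)
  fix xs show "xs \<in> {is. length is = Suc k \<and> set is \<subseteq> A} \<longleftrightarrow> xs \<in> (\<lambda>(a,l). a#l) ` (A \<times> {is. length is = k \<and> set is \<subseteq> A})"
    by (cases xs) auto
qed

lemma power_sum_expand: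
  fixes f :: "'a \<Rightarrow> 'b::comm_semiring_1"
  assumes "finite A"
  shows "(\<Sum>i\<in>A. f i) ^ k = (\<Sum>is\<in>{is. length is = k \<and> set is \<subseteq> A}. prod_list (map f is))"
proof (induction k)
  case 0
  have "{is. length is = 0 \<and> set is \<subseteq> A} = {[]}" by auto
  then show ?case by simp
next
  case (Suc k)
  let ?L = "{is. length is = k \<and> set is \<subseteq> A}"
  have fin: "finite ?L" using finite_lists_length_eq[OF assms, of k] by (simp add: conj_commute)
  have inj: "inj_on (\<lambda>(a,l). a#l) (A \<times> ?L)" by (auto simp: inj_on_def)
  have "(\<Sum>i\<in>A. f i) ^ Suc k = (\<Sum>i\<in>A. f i) * (\<Sum>is\<in>?L. prod_list (map f is))"
    using Suc by simp
  also have "\<dots> = (\<Sum>a\<in>A. \<Sum>l\<in>?L. f a * prod_list (map f l))"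
    by (rule sum_product)
  also have "\<dots> = (\<Sum>(a,l)\<in>A \<times> ?L. prod_list (map f (a#l)))"
    by (simp add: sum.cartesian_product)
  also have "\<dots> = (\<Sum>is\<in>(\<lambda>(a,l). a#l) ` (A \<times> ?L). prod_list (map f is))"
    using sum.reindex[OF inj, of "\<lambda>is. prod_list (map f is)"] by (simp add: case_prod_beta')
  also have "\<dots> = (\<Sum>is\<in>{is. length is = Suc k \<and> set is \<subseteq> A}. prod_list (map f is))"
    by (simp add: lists_Suc_eq)
  finally show ?case .
qed

lemma finite_idx: "finite (idx m n)"
  unfolding idx_def using finite_lists_length_eq[of "{1..n}" m] by (simp add: conj_commute)

lemma prod_list_map_mult:
  fixes f g :: "'a \<Rightarrow> 'b::comm_monoid_mult"
  shows   "prod_list (map f xs) * prod_list (map g xs) = prod_list (map (\<lambda>i. f i * g i) xs)"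
proof (induction xs)
  case (Cons a xs)
  have "prod_list (map f (a#xs)) * prod_list (map g (a#xs)) = (f a * g a) * (prod_list (map f xs) * prod_list (map g xs))"
    by (simp add: mult_ac)
  then show ?case using Cons by simp
qed simp

lemma sos_imp_psd: "sos_tensor m n T \<Longrightarrow> psd_tensor m n T"
  unfolding sos_tensor_def psd_tensor_def by (auto intro!: sum_nonneg)

lemma psd_imp_pos:
  assumes "psd_tensor m n (cauchy_tensor c)" "m \<ge> 1"
    and nz: "\<forall>is\<in>idx m n. sum_list (map c is) \<noteq> 0" and i: "i \<in> {1..n}"
  shows "c i > 0"
proof -
  define x where "x = (\<lambda>j. if j = i then 1 else (0::real))"
  have rep: "replicate m i \<in> idx m n" using i by (auto simp: idx_def)
  have px: "prod_list (map x is) = (if is = replicate m i then 1 else 0)" if "is \<in> idx m n" for "is"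
  proof (cases "is = replicate m i")
    case True then show ?thesis by (simp add: x_def)
  next
    case False
    have "length is = m" using that by (simp add: idx_def)
    then have "\<exists>j\<in>set is. j \<noteq> i" using False by (metis replicate_length_same)
    then obtain j where "j \<in> set is" "j \<noteq> i" by blast
    then have "0 \<in> set (map x is)" by (force simp: x_def)
    then show ?thesis using False by (simp add: prod_list_zero_iff)
  qed
  have "tensor_form m n (cauchy_tensor c) x = (\<Sum>is\<in>idx m n. cauchy_tensor c is * (if is = replicate m i then 1 else 0))"
    unfolding tensor_form_def by (rule sum.cong) (auto simp: px)
  also have "\<dots> = (\<Sum>is\<in>idx m n. if is = replicate m i then cauchy_tensor c is else 0)"
    by (intro sum.cong) auto
  also have "\<dots> = cauchy_tensor c (replicate m i)"
    using finite_idx[of m n] rep by (subst sum.delta) auto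
  also have "\<dots> = 1 / (real m * c i)" by (simp add: cauchy_tensor_def sum_list_replicate)
  finally have a: "1 / (real m * c i) \<ge> 0" using assms(1) unfolding psd_tensor_def by metis
  have "sum_list (map c (replicate m i)) \<noteq> 0" using nz rep by blast
  then have b: "real m * c i \<noteq> 0" by (simp add: sum_list_replicate)
  have "real m * c i \<ge> 0" using a by (simp only: zero_le_divide_1_iff)
  then have "real m * c i > 0" using b by linarith
  moreover have "real m > 0" using assms(2) by simp
  ultimately show ?thesis by (metis zero_less_mult_pos)
qed

lemma cp_imp_sos:
  assumes "completely_positive m n T" "even m"
  shows "sos_tensor m n T"
proof -
  obtain r :: nat and xs :: "nat \<Rightarrow> nat \<Rightarrow> real" where nn: "\<forall>j<r. \<forall>i\<in>{1..n}. xs j i \<ge> 0"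
    and eq: "\<forall>is\<in>idx m n. T is = (\<Sum>j<r. prod_list (map (xs j) is))"
    using assms(1) unfolding completely_positive_def by metis
  define k where "k = m div 2"
  have mk: "m = 2 * k" using assms(2) by (simp add: k_def)
  define ps where "ps = (\<lambda>j (x::nat\<Rightarrow>real). (\<Sum>i\<in>{1..n}. xs j i * x i) ^ k)"
  have "poly_deg_le n k (ps j)" for j
  proof -
    define a where "a = (\<lambda>is. if length is = k then prod_list (map (xs j) is) else 0)"
    have "ps j x = (\<Sum>is\<in>{is. length is \<le> k \<and> set is \<subseteq> {1..n}}. a is * prod_list (map x is))" for x
    proof -
      have "ps j x = (\<Sum>is\<in>{is. length is = k \<and> set is \<subseteq> {1..n}}. a is * prod_list (map x is))"
        unfolding ps_def by (subst power_sum_expand) (auto simp: a_def prod_list_map_mult intro!: sum.cong)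
      also have "\<dots> = (\<Sum>is\<in>{is. length is \<le> k \<and> set is \<subseteq> {1..n}}. a is * prod_list (map x is))"
      proof (rule sum.mono_neutral_left)
        show "finite {is. length is \<le> k \<and> set is \<subseteq> {1..n}}"
          using finite_lists_length_le[of "{1..n}" k] by (simp add: conj_commute)
      qed (auto simp: a_def)
      finally show ?thesis .
    qed
    then show ?thesis unfolding poly_deg_le_def by blast
  qed
  moreover have "tensor_form m n T x = (\<Sum>j<r. (ps j x)^2)" for x
  proof -
    have "tensor_form m n T x = (\<Sum>is\<in>idx m n. \<Sum>j<r. prod_list (map (\<lambda>i. xs j i * x i) is))"
      unfolding tensor_form_def using eq by (auto simp: sum_distrib_right prod_list_map_mult intro!: sum.cong)
    also have "\<dots> = (\<Sum>j<r. \<Sum>is\<in>idx m n. prod_list (map (\<lambda>i. xs j i * x i) is))"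
      by (rule sum.swap)
    also have "\<dots> = (\<Sum>j<r. (\<Sum>i\<in>{1..n}. xs j i * x i) ^ m)"
      by (simp add: power_sum_expand idx_def)
    also have "\<dots> = (\<Sum>j<r. (ps j x)^2)"
      by (simp add: ps_def mk power_mult[symmetric] mult.commute)
    finally show ?thesis .
  qed
  ultimately show ?thesis unfolding sos_tensor_def k_def by blast
qed

lemma lin_dep:
  fixes g :: "nat \<Rightarrow> 'i \<Rightarrow> real"
  assumes "finite I"
  shows "finite J \<Longrightarrow> card I < card J \<Longrightarrow> \<exists>l. (\<exists>j\<in>J. l j \<noteq> 0) \<and> (\<forall>i\<in>I. (\<Sum>j\<in>J. l j * g j i) = 0)"
  using assms
proof (induction I arbitrary: J g rule: finite_induct)
  case empty
  then have "J \<noteq> {}" by auto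
  then show ?case by (rule_tac x="\<lambda>_. 1" in exI) auto
next
  case (insert i0 I)
  show ?case
  proof (cases "\<forall>j\<in>J. g j i0 = 0")
    case True
    from insert.IH[of J g] insert.prems insert.hyps obtain l where
      "\<exists>j\<in>J. l j \<noteq> 0" "\<forall>i\<in>I. (\<Sum>j\<in>J. l j * g j i) = 0" by auto
    then show ?thesis using True by (rule_tac x=l in exI) auto
  next
    case False
    then obtain j0 where j0: "j0 \<in> J" "g j0 i0 \<noteq> 0" by auto
    define J' where "J' = J - {j0}"
    define h where "h = (\<lambda>j i. g j i - g j i0 / g j0 i0 * g j0 i)"
    have fJ': "finite J'" using insert.prems by (simp add: J'_def)
    have cJ': "card I < card J'" using insert.prems insert.hyps j0 by (simp add: J'_def card_Diff_singleton)
    from insert.IH[OF fJ' cJ', of h] obtain mu where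
      mu1: "\<exists>j\<in>J'. mu j \<noteq> 0" and mu2: "\<forall>i\<in>I. (\<Sum>j\<in>J'. mu j * h j i) = 0" by auto
    define S where "S = (\<Sum>j\<in>J'. mu j * g j i0)"
    define l where "l = (\<lambda>j. if j = j0 then - S / g j0 i0 else mu j)"
    have J: "J = insert j0 J'" "j0 \<notin> J'" using j0 by (auto simp: J'_def)
    have sl: "(\<Sum>j\<in>J. l j * g j i) = - S / g j0 i0 * g j0 i + (\<Sum>j\<in>J'. mu j * g j i)" for i
    proof -
      have "(\<Sum>j\<in>J'. l j * g j i) = (\<Sum>j\<in>J'. mu j * g j i)"
        using J(2) by (intro sum.cong) (auto simp: l_def)
      then show ?thesis using J fJ' by (simp add: l_def)
    qed
    have "(\<Sum>j\<in>J. l j * g j i) = 0" if "i \<in> insert i0 I" for i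
    proof (cases "i = i0")
      case True
      then show ?thesis using sl[of i0] j0(2) by (simp add: S_def)
    next
      case False
      then have iI: "i \<in> I" using that by auto
      have "(\<Sum>j\<in>J'. mu j * g j i) = (\<Sum>j\<in>J'. mu j * h j i) + (\<Sum>j\<in>J'. mu j * g j i0) / g j0 i0 * g j0 i"
        by (simp add: h_def algebra_simps sum_subtractf sum_distrib_right sum_distrib_left sum_divide_distrib)
      also have "\<dots> = S / g j0 i0 * g j0 i" using mu2 iI by (simp add: S_def)
      finally show ?thesis using sl[of i] by simp
    qed
    moreover have "\<exists>j\<in>J. l j \<noteq> 0" using mu1 J by (force simp: l_def)
    ultimately show ?thesis by blast
  qed
qed

lemma carath_step:
  fixes g :: "nat \<Rightarrow> 'i \<Rightarrow> real"
  assumes "finite I" "finite J" "card I < card J" "\<forall>j\<in>J. w j \<ge> 0"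
  shows "\<exists>j0\<in>J. \<exists>w'. (\<forall>j\<in>J. w' j \<ge> 0) \<and> (\<forall>i\<in>I. (\<Sum>j\<in>J. w j * g j i) = (\<Sum>j\<in>J-{j0}. w' j * g j i))"
proof -
  obtain l0 where l0: "\<exists>j\<in>J. l0 j \<noteq> 0" "\<forall>i\<in>I. (\<Sum>j\<in>J. l0 j * g j i) = 0"
    using lin_dep[OF assms(1,2,3)] by blast
  obtain l where l: "\<exists>j\<in>J. l j > 0" "\<forall>i\<in>I. (\<Sum>j\<in>J. l j * g j i) = 0"
  proof (cases "\<exists>j\<in>J. l0 j > 0")
    case True then show ?thesis using l0 that by blast
  next
    case False
    then have "\<exists>j\<in>J. - l0 j > 0" using l0(1) by force
    moreover have "\<forall>i\<in>I. (\<Sum>j\<in>J. (- l0 j) * g j i) = 0" using l0(2) by (simp add: sum_negf)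
    ultimately show ?thesis using that[of "\<lambda>j. - l0 j"] by blast
  qed
  define P where "P = {j\<in>J. l j > 0}"
  have fP: "finite P" "P \<noteq> {}" using assms(2) l(1) by (auto simp: P_def)
  define th where "th = Min ((\<lambda>j. w j / l j) ` P)"
  have "th \<in> (\<lambda>j. w j / l j) ` P" unfolding th_def using fP by (intro Min_in) auto
  then obtain j0 where j0: "j0 \<in> P" "th = w j0 / l j0" by auto
  have thle: "th \<le> w j / l j" if "j \<in> P" for j using fP that by (auto simp: th_def)
  have th0: "th \<ge> 0" using j0 assms(4) by (auto simp: P_def)
  define w' where "w' = (\<lambda>j. w j - th * l j)"
  have w'nn: "w' j \<ge> 0" if "j \<in> J" for j
  proof (cases "l j > 0")
    case True
    then have "th \<le> w j / l j" using thle that by (auto simp: P_def)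
    then show ?thesis using True by (simp add: w'_def pos_le_divide_eq mult.commute)
  next
    case False
    then have "th * l j \<le> 0" using th0 by (simp add: mult_nonneg_nonpos)
    moreover have "w j \<ge> 0" using assms(4) that by blast
    ultimately show ?thesis by (simp add: w'_def)
  qed
  have w'j0: "w' j0 = 0" using j0 by (auto simp: w'_def P_def)
  have "(\<Sum>j\<in>J. w j * g j i) = (\<Sum>j\<in>J-{j0}. w' j * g j i)" if "i \<in> I" for i
  proof -
    have "(\<Sum>j\<in>J. w' j * g j i) = (\<Sum>j\<in>J. w j * g j i) - th * (\<Sum>j\<in>J. l j * g j i)"
      by (simp add: w'_def algebra_simps sum_subtractf sum_distrib_left)
    also have "\<dots> = (\<Sum>j\<in>J. w j * g j i)" using l(2) that by simp
    finally have "(\<Sum>j\<in>J. w j * g j i) = (\<Sum>j\<in>J. w' j * g j i)" by simp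
    also have "\<dots> = (\<Sum>j\<in>J-{j0}. w' j * g j i)"
      using j0(1) assms(2) w'j0 by (subst sum.remove[of J j0]) (auto simp: P_def)
    finally show ?thesis .
  qed
  then show ?thesis using j0(1) w'nn by (auto simp: P_def)
qed

lemma carath:
  fixes g :: "nat \<Rightarrow> 'i \<Rightarrow> real"
  assumes "finite I"
  shows "finite J \<Longrightarrow> \<forall>j\<in>J. w j \<ge> 0 \<Longrightarrow> \<exists>J'\<subseteq>J. card J' \<le> card I \<and> (\<exists>w'. (\<forall>j\<in>J'. w' j \<ge> 0) \<and> (\<forall>i\<in>I. (\<Sum>j\<in>J. w j * g j i) = (\<Sum>j\<in>J'. w' j * g j i)))"
proof (induction "card J" arbitrary: J w rule: less_induct)
  case less
  show ?case
  proof (cases "card J \<le> card I")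
    case True then show ?thesis using less.prems by blast
  next
    case False
    then obtain j0 w' where j0: "j0 \<in> J" and w': "\<forall>j\<in>J. w' j \<ge> 0"
      and eq: "\<forall>i\<in>I. (\<Sum>j\<in>J. w j * g j i) = (\<Sum>j\<in>J-{j0}. w' j * g j i)"
      using carath_step[OF assms less.prems(1) _ less.prems(2), of g] by auto
    have "card (J - {j0}) < card J" using j0 less.prems(1) by (metis card_Diff1_less)
    from less.hyps[OF this, of w'] less.prems(1) w' obtain J' w'' where
      "J' \<subseteq> J - {j0}" "card J' \<le> card I" "\<forall>j\<in>J'. w'' j \<ge> 0"
      "\<forall>i\<in>I. (\<Sum>j\<in>J-{j0}. w' j * g j i) = (\<Sum>j\<in>J'. w'' j * g j i)" by auto
    then show ?thesis using eq by (rule_tac x=J' in exI) auto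
  qed
qed

definition nrep :: "nat \<Rightarrow> nat \<Rightarrow> nat \<Rightarrow> (nat list \<Rightarrow> real) \<Rightarrow> bool" where
 "nrep m n D v \<longleftrightarrow> (\<exists>W U. (\<forall>j<D. W j \<ge> 0 \<and> (\<forall>i\<in>{1..n}. U j i \<ge> (0::real)) \<and> (\<Sum>i\<in>{1..n}. U j i) = 1)
     \<and> (\<forall>is\<in>idx m n. v is = (\<Sum>j<D. W j * prod_list (map (U j) is))))"

lemma prod_list_map_div:
  "prod_list (map (\<lambda>i. f i / (s::real)) xs) = prod_list (map f xs) / s ^ length xs"
  by (induction xs) auto

lemma prod_list_map_scale:
  "prod_list (map (\<lambda>i. (a::real) * f i) xs) = a ^ length xs * prod_list (map f xs)"
  by (induction xs) auto

lemma to_nrep: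
  fixes u :: "nat \<Rightarrow> nat \<Rightarrow> real" and w :: "nat \<Rightarrow> real" and N :: nat
  assumes m: "m \<ge> 1" and n: "n \<ge> 1"
    and nn: "\<forall>j<N. w j \<ge> 0 \<and> (\<forall>i\<in>{1..n}. u j i \<ge> (0::real))"
    and v: "\<forall>is\<in>idx m n. v is = (\<Sum>j<N. w j * prod_list (map (u j) is))"
  shows "nrep m n (card (idx m n)) v"
proof -
  let ?I = "idx m n"
  let ?g = "\<lambda>j is. prod_list (map (u j) is)"
  obtain J' w' where J': "J' \<subseteq> {..<N}" "card J' \<le> card ?I" and w'nn: "\<forall>j\<in>J'. w' j \<ge> 0"
    and eq: "\<forall>is\<in>?I. (\<Sum>j\<in>{..<N}. w j * ?g j is) = (\<Sum>j\<in>J'. w' j * ?g j is)"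
    using carath[OF finite_idx[of m n], where J="{..<N}" and w=w and g="\<lambda>j is. prod_list (map (u j) is)"] nn by auto
  have fJ': "finite J'" using J'(1) finite_subset by blast
  obtain h where h: "bij_betw h {0..<card J'} J'" using ex_bij_betw_nat_finite[OF fJ'] by blast
  define e1 where "e1 = (\<lambda>i::nat. if i = 1 then 1 else (0::real))"
  define sg where "sg = (\<lambda>k. \<Sum>i\<in>{1..n}. u (h k) i)"
  define U where "U = (\<lambda>k. if k < card J' \<and> sg k > 0 then (\<lambda>i. u (h k) i / sg k) else e1)"
  define W where "W = (\<lambda>k. if k < card J' \<and> sg k > 0 then w' (h k) * sg k ^ m else 0)"
  have hk: "h k \<in> J'" if "k < card J'" for k using h that by (auto simp: bij_betw_def)
  have unn: "u (h k) i \<ge> 0" if "k < card J'" "i \<in> {1..n}" for k i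
    using nn hk[OF that(1)] J'(1) that(2) by auto
  have sgnn: "sg k \<ge> 0" if "k < card J'" for k unfolding sg_def using unn[OF that] by (intro sum_nonneg) auto
  have e1sum: "(\<Sum>i\<in>{1..n}. e1 i) = 1" using n by (simp add: e1_def)
  have props: "W k \<ge> 0 \<and> (\<forall>i\<in>{1..n}. U k i \<ge> 0) \<and> (\<Sum>i\<in>{1..n}. U k i) = 1" for k
  proof (cases "k < card J' \<and> sg k > 0")
    case True
    have "(\<Sum>i\<in>{1..n}. u (h k) i / sg k) = 1" using True by (simp add: sum_divide_distrib[symmetric] sg_def)
    then show ?thesis using True unn w'nn hk by (auto simp: U_def W_def)
  next
    case False then show ?thesis using e1sum by (auto simp: U_def W_def e1_def)
  qed
  have trm: "W k * prod_list (map (U k) is) = w' (h k) * ?g (h k) is" if "k < card J'" "is \<in> ?I" for k "is"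
  proof (cases "sg k > 0")
    case True
    have "length is = m" using that(2) by (simp add: idx_def)
    then show ?thesis using True that(1) by (simp add: U_def W_def prod_list_map_div)
  next
    case False
    then have "sg k = 0" using sgnn[OF that(1)] by simp
    then have z: "\<forall>i\<in>{1..n}. u (h k) i = 0" unfolding sg_def using unn[OF that(1)]
      by (subst (asm) sum_nonneg_eq_0_iff) auto
    have "is \<noteq> []" "set is \<subseteq> {1..n}" using that(2) m by (auto simp: idx_def)
    then obtain i where "i \<in> set is" "i \<in> {1..n}" by (cases "is") auto
    then have "0 \<in> set (map (u (h k)) is)" using z by force
    then have "?g (h k) is = 0" by (simp add: prod_list_zero_iff)
    then show ?thesis using False by (simp add: W_def)
  qed
  have "v is = (\<Sum>j<card ?I. W j * prod_list (map (U j) is))" if "is \<in> ?I" for "is"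
  proof -
    have "v is = (\<Sum>j\<in>J'. w' j * ?g j is)" using v eq that by simp
    also have "\<dots> = (\<Sum>k\<in>{0..<card J'}. w' (h k) * ?g (h k) is)"
      using sum.reindex_bij_betw[OF h, of "\<lambda>j. w' j * ?g j is"] by simp
    also have "\<dots> = (\<Sum>k\<in>{0..<card J'}. W k * prod_list (map (U k) is))"
      using trm that by (intro sum.cong) auto
    also have "\<dots> = (\<Sum>k<card ?I. W k * prod_list (map (U k) is))"
      using J'(2) by (intro sum.mono_neutral_left) (auto simp: W_def)
    finally show ?thesis .
  qed
  then show ?thesis unfolding nrep_def using props by blast
qed

lemma tendsto_prod_list_map:
  "(\<forall>i\<in>set xs. (\<lambda>M. F M i) \<longlonglongrightarrow> (a i::real)) \<Longrightarrow> (\<lambda>M. prod_list (map (F M) xs)) \<longlonglongrightarrow> prod_list (map a xs)"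
  by (induction xs) (auto intro!: tendsto_mult)

lemma subseq_conv:
  fixes X :: "nat \<Rightarrow> 'k \<Rightarrow> real"
  assumes "finite K" "\<forall>M. \<forall>k\<in>K. \<bar>X M k\<bar> \<le> B"
  shows "\<exists>r. strict_mono r \<and> (\<forall>k\<in>K. convergent (\<lambda>M. X (r M) k))"
  using assms
proof (induction K rule: finite_induct)
  case empty
  have "strict_mono (id::nat\<Rightarrow>nat)" by (simp add: strict_mono_def)
  then show ?case by blast
next
  case (insert k0 K)
  then obtain r where r: "strict_mono r" "\<forall>k\<in>K. convergent (\<lambda>M. X (r M) k)" by auto
  obtain f where f: "strict_mono f" "monoseq (\<lambda>M. X (r (f M)) k0)"
    using seq_monosub[of "\<lambda>M. X (r M) k0"] by blast
  have "Bseq (\<lambda>M. X (r (f M)) k0)" using insert.prems by (intro BseqI'[of _ B]) auto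
  then have c0: "convergent (\<lambda>M. X (r (f M)) k0)" using f(2) Bseq_monoseq_convergent by blast
  have "convergent (\<lambda>M. X (r (f M)) k)" if "k \<in> K" for k
  proof -
    have "(\<lambda>M. X (r M) k) \<longlonglongrightarrow> lim (\<lambda>M. X (r M) k)" using r(2) that convergent_LIMSEQ_iff by blast
    from LIMSEQ_subseq_LIMSEQ[OF this f(1)] show ?thesis by (auto simp: convergent_def o_def)
  qed
  moreover have "strict_mono (\<lambda>M. r (f M))" using strict_mono_o[OF r(1) f(1)] by (simp add: o_def)
  ultimately show ?case using c0 by (rule_tac x="\<lambda>M. r (f M)" in exI) auto
qed

lemma nrep_closed:
  fixes v :: "nat \<Rightarrow> nat list \<Rightarrow> real"
  assumes rep: "\<forall>M. nrep m n D (v M)" and lim: "\<forall>is\<in>idx m n. (\<lambda>M. v M is) \<longlonglongrightarrow> L is"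
  shows "\<exists>w u. (\<forall>j<D. w j \<ge> 0 \<and> (\<forall>i\<in>{1..n}. u j i \<ge> (0::real))) \<and>
               (\<forall>is\<in>idx m n. L is = (\<Sum>j<D. w j * prod_list (map (u j) is)))"
proof -
  let ?I = "idx m n"
  define P where "P = (\<lambda>M W (U::nat\<Rightarrow>nat\<Rightarrow>real). (\<forall>j<D. W j \<ge> 0 \<and> (\<forall>i\<in>{1..n}. U j i \<ge> (0::real)) \<and> (\<Sum>i\<in>{1..n}. U j i) = 1)
     \<and> (\<forall>is\<in>?I. v M is = (\<Sum>j<D. W j * prod_list (map (U j) is))))"
  have "\<forall>M. \<exists>W U. P M W U"
    unfolding P_def using rep[unfolded nrep_def] .
  then have "\<exists>W. \<forall>M. \<exists>U. P M (W M) U" by (rule choice)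
  then obtain W where "\<forall>M. \<exists>U. P M (W M) U" by blast
  then have "\<exists>U. \<forall>M. P M (W M) (U M)" by (rule choice)
  then obtain U where PU: "\<forall>M. P M (W M) (U M)" by blast
  have WU: "\<And>M. (\<forall>j<D. W M j \<ge> 0 \<and> (\<forall>i\<in>{1..n}. U M j i \<ge> (0::real)) \<and> (\<Sum>i\<in>{1..n}. U M j i) = 1)"
    using PU unfolding P_def by blast
  have veq: "\<And>M. \<forall>is\<in>?I. v M is = (\<Sum>j<D. W M j * prod_list (map (U M j) is))"
    using PU unfolding P_def by blast
  have wsum: "(\<Sum>is\<in>?I. v M is) = (\<Sum>j<D. W M j)" for M
  proof -
    have "(\<Sum>is\<in>?I. v M is) = (\<Sum>is\<in>?I. \<Sum>j<D. W M j * prod_list (map (U M j) is))"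
      using veq by (intro sum.cong) auto
    also have "\<dots> = (\<Sum>j<D. W M j * (\<Sum>is\<in>?I. prod_list (map (U M j) is)))"
      by (subst sum.swap) (simp add: sum_distrib_left)
    also have "\<dots> = (\<Sum>j<D. W M j)"
    proof (intro sum.cong refl)
      fix j assume "j \<in> {..<D}"
      have "(\<Sum>is\<in>?I. prod_list (map (U M j) is)) = (\<Sum>i\<in>{1..n}. U M j i) ^ m"
        by (simp add: power_sum_expand idx_def)
      also have "\<dots> = 1" using WU \<open>j \<in> {..<D}\<close> by simp
      finally show "W M j * (\<Sum>is\<in>?I. prod_list (map (U M j) is)) = W M j" by simp
    qed
    finally show ?thesis .
  qed
  have "(\<lambda>M. \<Sum>is\<in>?I. v M is) \<longlonglongrightarrow> (\<Sum>is\<in>?I. L is)"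
    using lim by (intro tendsto_sum) auto
  then have "Bseq (\<lambda>M. \<Sum>is\<in>?I. v M is)" using convergent_imp_Bseq convergentI by blast
  then obtain B0 where B0: "\<forall>M. norm (\<Sum>is\<in>?I. v M is) \<le> B0" using BseqE by metis
  have Wb: "W M j \<le> B0" if "j < D" for M j
  proof -
    have "W M j \<le> (\<Sum>j<D. W M j)" using WU that by (intro member_le_sum) auto
    also have "\<dots> \<le> B0" using B0[rule_format, of M] wsum[of M] by simp
    finally show ?thesis .
  qed
  have Ub: "U M j i \<le> 1" if "j < D" "i \<in> {1..n}" for M j i
  proof -
    have "U M j i \<le> (\<Sum>i\<in>{1..n}. U M j i)" using WU that by (intro member_le_sum) auto
    then show ?thesis using WU that by simp
  qed
  define X where "X = (\<lambda>M (p::nat\<times>nat). if snd p = 0 then W M (fst p) else U M (fst p) (snd p))"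
  define K where "K = {..<D} \<times> {0..n}"
  have bnd: "\<forall>M. \<forall>k\<in>K. \<bar>X M k\<bar> \<le> max B0 1"
  proof (intro allI ballI)
    fix M k assume k: "k \<in> K"
    obtain j i where ji: "k = (j,i)" "j < D" "i \<le> n" using k by (auto simp: K_def)
    show "\<bar>X M k\<bar> \<le> max B0 1"
    proof (cases "i = 0")
      case True then show ?thesis using ji WU[of M] Wb[of j M] by (auto simp: X_def)
    next
      case False then have "i \<in> {1..n}" using ji by auto
      then show ?thesis using ji WU[of M] Ub[of j i M] False by (auto simp: X_def)
    qed
  qed
  have "finite K" by (simp add: K_def)
  from subseq_conv[OF this bnd] obtain r where r: "strict_mono r" "\<forall>k\<in>K. convergent (\<lambda>M. X (r M) k)"
    by blast
  define Wl where "Wl = (\<lambda>j. lim (\<lambda>M. W (r M) j))"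
  define Ul where "Ul = (\<lambda>j i. lim (\<lambda>M. U (r M) j i))"
  have Wc: "(\<lambda>M. W (r M) j) \<longlonglongrightarrow> Wl j" if "j < D" for j
  proof -
    have "convergent (\<lambda>M. X (r M) (j,0))" using r(2) that by (auto simp: K_def)
    then show ?thesis by (simp add: X_def Wl_def convergent_LIMSEQ_iff)
  qed
  have Uc: "(\<lambda>M. U (r M) j i) \<longlonglongrightarrow> Ul j i" if "j < D" "i \<in> {1..n}" for j i
  proof -
    have "convergent (\<lambda>M. X (r M) (j,i))" using r(2) that by (auto simp: K_def)
    then show ?thesis using that by (simp add: X_def Ul_def convergent_LIMSEQ_iff)
  qed
  have Wnn: "Wl j \<ge> 0" if "j < D" for j
    using Wc[OF that] WU that by (intro LIMSEQ_le_const) auto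
  have Unn: "Ul j i \<ge> 0" if "j < D" "i \<in> {1..n}" for j i
    using Uc[OF that] WU that by (intro LIMSEQ_le_const) auto
  have "L is = (\<Sum>j<D. Wl j * prod_list (map (Ul j) is))" if "is \<in> ?I" for "is"
  proof -
    have l1: "(\<lambda>M. v (r M) is) \<longlonglongrightarrow> L is"
      using LIMSEQ_subseq_LIMSEQ[OF lim[rule_format, OF that] r(1)] by (simp add: o_def)
    have si: "set is \<subseteq> {1..n}" using that by (simp add: idx_def)
    have "(\<lambda>M. \<Sum>j<D. W (r M) j * prod_list (map (U (r M) j) is)) \<longlonglongrightarrow> (\<Sum>j<D. Wl j * prod_list (map (Ul j) is))"
      using si Wc Uc by (intro tendsto_sum tendsto_mult tendsto_prod_list_map) auto
    moreover have "(\<lambda>M. v (r M) is) = (\<lambda>M. \<Sum>j<D. W (r M) j * prod_list (map (U (r M) j) is))"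
      using veq that by auto
    ultimately have "(\<lambda>M. v (r M) is) \<longlonglongrightarrow> (\<Sum>j<D. Wl j * prod_list (map (Ul j) is))" by simp
    from LIMSEQ_unique[OF l1 this] show ?thesis .
  qed
  then show ?thesis using Wnn Unn by (intro exI[of _ Wl] exI[of _ Ul]) auto
qed

lemma exp_prod: fixes a :: real and c :: "nat \<Rightarrow> real" shows "prod_list (map (\<lambda>i. exp (a * c i)) xs) = exp (a * sum_list (map c xs))"
proof (induction xs)
  case (Cons x xs)
  have "exp (a * c x) * exp (a * sum_list (map c xs)) = exp (a * c x + a * sum_list (map c xs))"
    by (rule exp_add[symmetric])
  then show ?case using Cons by (simp add: distrib_left)
qed simp

lemma sum_list_pos: "\<forall>i\<in>set xs. (c i::real) > 0 \<Longrightarrow> xs \<noteq> [] \<Longrightarrow> sum_list (map c xs) > 0"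
proof (induction xs)
  case (Cons a xs) then show ?case by (cases "xs = []") (auto intro: add_pos_pos)
qed simp

lemma expm1_lim: "(\<lambda>M. (exp (- (inverse (real (Suc M)) * s)) - 1) / (- (inverse (real (Suc M)) * s))) \<longlonglongrightarrow> 1"
  if s: "s > 0" for s :: real
proof -
  have d: "((\<lambda>h::real. (exp h - 1) / h) \<longlongrightarrow> 1) (at 0)"
    using DERIV_exp[of "0::real"] unfolding DERIV_def by (simp add: o_def)
  have y0: "(\<lambda>M. - (inverse (real (Suc M)) * s)) \<longlonglongrightarrow> 0"
    using tendsto_minus[OF tendsto_mult[OF LIMSEQ_inverse_real_of_nat tendsto_const[of s]]] by simp
  have "filterlim (\<lambda>M. - (inverse (real (Suc M)) * s)) (at 0) sequentially"
    using y0 s by (auto simp: filterlim_at)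
  from filterlim_compose[OF d this] show ?thesis by (simp add: o_def)
qed

lemma approx_lim:
  fixes s :: real assumes s: "s > 0"
  shows "(\<lambda>M. \<Sum>k<Suc M * Suc M. inverse (real (Suc M)) * exp (- (real k * inverse (real (Suc M))) * s)) \<longlonglongrightarrow> 1 / s"
proof -
  define h where "h = (\<lambda>M. inverse (real (Suc M)))"
  define y where "y = (\<lambda>M. - (h M * s))"
  define Q where "Q = (\<lambda>M. (exp (y M) - 1) / y M)"
  have eq: "(\<Sum>k<Suc M * Suc M. h M * exp (- (real k * h M) * s)) = 1 / (s * Q M) * (1 - exp (- s) ^ Suc M)" for M
  proof -
    have hpos: "h M > 0" by (simp add: h_def)
    have yneg: "y M < 0" using hpos s by (simp add: y_def)
    have e1: "exp (y M) \<noteq> 1" using yneg by simp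
    have "(\<Sum>k<Suc M * Suc M. h M * exp (- (real k * h M) * s)) = h M * (\<Sum>k<Suc M * Suc M. exp (y M) ^ k)"
      by (simp add: sum_distrib_left y_def exp_of_nat_mult[symmetric] algebra_simps)
    also have "\<dots> = h M * ((1 - exp (y M) ^ (Suc M * Suc M)) / (1 - exp (y M)))"
      by (simp only: sum_gp_strict if_not_P[OF e1])
    also have "exp (y M) ^ (Suc M * Suc M) = exp (- s) ^ Suc M"
    proof -
      have "exp (y M) ^ (Suc M * Suc M) = exp (real (Suc M * Suc M) * y M)" by (rule exp_of_nat_mult[symmetric])
      also have "real (Suc M * Suc M) * y M = real (Suc M) * (- s)"
        by (simp add: y_def h_def field_simps)
      also have "exp \<dots> = exp (- s) ^ Suc M" by (rule exp_of_nat_mult)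
      finally show ?thesis .
    qed
    also have "h M * ((1 - exp (- s) ^ Suc M) / (1 - exp (y M))) = 1 / (s * Q M) * (1 - exp (- s) ^ Suc M)"
    proof -
      have yq: "y M * Q M = exp (y M) - 1" using yneg by (simp add: Q_def)
      have "1 - exp (y M) = - (y M * Q M)" using yq by simp
      also have "\<dots> = h M * s * Q M" by (simp add: y_def)
      finally have hq: "1 - exp (y M) = h M * s * Q M" .
      then have Qnz: "Q M \<noteq> 0" using e1 by auto
      have "h M * ((1 - z) / (h M * s * Q M)) = 1 / (s * Q M) * (1 - z)" for z
        using hpos s Qnz by (simp add: field_simps)
      then show ?thesis by (simp only: hq)
    qed
    finally show ?thesis .
  qed
  have Q1: "Q \<longlonglongrightarrow> 1" using expm1_lim[OF s] by (simp add: Q_def y_def h_def)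
  have P0: "(\<lambda>M. exp (- s) ^ Suc M) \<longlonglongrightarrow> 0"
    using LIMSEQ_Suc[OF LIMSEQ_power_zero[of "exp (- s)"]] s by simp
  have "(\<lambda>M. 1 / (s * Q M) * (1 - exp (- s) ^ Suc M)) \<longlonglongrightarrow> 1 / (s * 1) * (1 - 0)"
    using s by (intro tendsto_intros Q1 P0) auto
  then show ?thesis using eq by (simp add: h_def)
qed

lemma pos_imp_cp:
  assumes m: "m \<ge> 1" and n: "n \<ge> 1" and pos: "\<forall>i\<in>{1..n}. c i > 0"
  shows "completely_positive m n (cauchy_tensor c)"
proof -
  let ?I = "idx m n"
  define D where "D = card ?I"
  define h where "h = (\<lambda>M::nat. inverse (real (Suc M)))"
  define v where "v = (\<lambda>M is. \<Sum>k<Suc M * Suc M. h M * prod_list (map (\<lambda>i. exp (- (real k * h M) * c i)) is))"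
  have "nrep m n D (v M)" for M
    unfolding D_def
    by (rule to_nrep[OF m n, where N="Suc M * Suc M" and w="\<lambda>_. h M" and u="\<lambda>k i. exp (- (real k * h M) * c i)"])
       (auto simp: v_def h_def)
  moreover have "(\<lambda>M. v M is) \<longlonglongrightarrow> cauchy_tensor c is" if "is \<in> ?I" for "is"
  proof -
    have "is \<noteq> []" "set is \<subseteq> {1..n}" using that m by (auto simp: idx_def)
    then have sp: "sum_list (map c is) > 0" using pos by (intro sum_list_pos) auto
    have "v M is = (\<Sum>k<Suc M * Suc M. inverse (real (Suc M)) * exp (- (real k * inverse (real (Suc M))) * sum_list (map c is)))" for M
      by (simp only: v_def h_def exp_prod)
    then show ?thesis using approx_lim[OF sp] by (simp add: cauchy_tensor_def)
  qed
  ultimately obtain w u where wu: "\<forall>j<D. w j \<ge> 0 \<and> (\<forall>i\<in>{1..n}. u j i \<ge> (0::real))"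
    and eq: "\<forall>is\<in>?I. cauchy_tensor c is = (\<Sum>j<D. w j * prod_list (map (u j) is))"
    using nrep_closed[of m n D v "cauchy_tensor c"] by blast
  define xs where "xs = (\<lambda>j i. root m (w j) * u j i)"
  have "\<forall>j<D. \<forall>i\<in>{1..n}. xs j i \<ge> 0" using wu by (auto simp: xs_def intro!: mult_nonneg_nonneg real_root_ge_zero)
  moreover have "\<forall>is\<in>?I. cauchy_tensor c is = (\<Sum>j<D. prod_list (map (xs j) is))"
  proof
    fix "is" assume "is \<in> ?I"
    then have len: "length is = m" by (simp add: idx_def)
    have "prod_list (map (xs j) is) = w j * prod_list (map (u j) is)" if "j < D" for j
      using wu that m len by (simp add: xs_def prod_list_map_scale)
    then show "cauchy_tensor c is = (\<Sum>j<D. prod_list (map (xs j) is))"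
      using eq \<open>is \<in> ?I\<close> by simp
  qed
  ultimately show ?thesis unfolding completely_positive_def by blast
qed

theorem corollary3p1:
  fixes m n :: nat and c :: "nat \<Rightarrow> real"
  assumes "even m" and "m \<ge> 2" and "n \<ge> 2"
    and "\<forall>is\<in>idx m n. sum_list (map c is) \<noteq> 0"
  shows "(sos_tensor m n (cauchy_tensor c) \<longleftrightarrow> psd_tensor m n (cauchy_tensor c))
       \<and> (psd_tensor m n (cauchy_tensor c) \<longleftrightarrow> completely_positive m n (cauchy_tensor c))
       \<and> (completely_positive m n (cauchy_tensor c) \<longleftrightarrow> (\<forall>i\<in>{1..n}. c i > 0))"
proof -
  have m1: "m \<ge> 1" and n1: "n \<ge> 1" using assms by auto
  have 1: "sos_tensor m n (cauchy_tensor c) \<Longrightarrow> psd_tensor m n (cauchy_tensor c)" by (rule sos_imp_psd)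
  have 2: "psd_tensor m n (cauchy_tensor c) \<Longrightarrow> \<forall>i\<in>{1..n}. c i > 0"
    using psd_imp_pos[OF _ m1 assms(4)] by blast
  have 3: "\<forall>i\<in>{1..n}. c i > 0 \<Longrightarrow> completely_positive m n (cauchy_tensor c)"
    using pos_imp_cp[OF m1 n1] by blast
  have 4: "completely_positive m n (cauchy_tensor c) \<Longrightarrow> sos_tensor m n (cauchy_tensor c)"
    using cp_imp_sos assms(1) by blast
  show ?thesis using 1 2 3 4 by blast
qed

end
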